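(* Let $s$ be a closed term with $s\succ^k t$ for some abstraction $t$. Then the heap machine satisfies $\sigma_s\succ^{4k+2}([],[g],H)$ for some closure $g$ and heap $H$ with $g\gg_H t$.
   Context: Terms (de Bruijn): $s::=n\mid st\mid\lambda s$; $s$ is closed if all its free de Bruijn indices are... none (i.e. every index $n$ occurring under $d$ binders satisfies $n<d$). Term substitution: $k^k_u=u$, $n^k_u=n$ ($n\ne k$), $(st)^k_u=(s^k_u)(t^k_u)$, $(\lambda s)^k_u=\lambda(s^{k+1}_u)$. Reduction: $(\lambda s)(\lambda t)\succ s^0_{\lambda t}$; $s\succ s'\Rightarrow st\succ s't$; $t\succ t'\Rightarrow(\lambda s)t\succ(\lambda s)t'$. Programs: lists of commands $\mathsf{ret},\mathsf{var}\,n,\mathsf{lam},\mathsf{app}$. Compilation: $\gamma n=[\mathsf{var}\,n]$, $\gamma(st)=\gamma s++\gamma t++[\mathsf{app}]$, $\gamma(\lambda s)=\mathsf{lam}::\gamma s++[\mathsf{ret}]$. $P\gg s$ iff $P=\gamma u$ and $s=\lambda u$. $\varphi P:=\varphi_{0,[]}P$ with $\varphi_{0,Q}(\mathsf{ret}::P)=(Q,P)$, $\varphi_{k+1,Q}(\mathsf{ret}::P)=\varphi_{k,Q++[\mathsf{ret}]}P$, $\varphi_{k,Q}(\mathsf{lam}::P)=\varphi_{k+1,Q++[\mathsf{lam}]}P$, $\varphi_{k,Q}(c::P)=\varphi_{k,Q++[c]}P$ for $c$ a $\mathsf{var}$ or $\mathsf{app}$, undefined otherwise. Addresses are natural numbers;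 a closure is a pair $(P,a)$ of a program and an address; a heap entry is a pair $(g,b)$ of a closure and an address; a heap $H$ is a list of heap entries; $H[a]$ is the $a$-th entry of $H$ for $1\le a\le|H|$ (undefined otherwise, in particular for $a=0$). Lookup: if $H[a]=(g,b)$ then $H[a,0]=g$ and $H[a,n+1]=H[b,n]$; otherwise $H[a,n]$ is undefined. Unfolding $\langle s,a\rangle\triangleright^H_k s'$ is defined inductively: $\langle n,a\rangle\triangleright^H_k n$ if $n<k$; $\langle n,a\rangle\triangleright^H_k s'$ if $n\ge k$, $H[a,n-k]=(P,b)$, $P\gg u$ and $\langle u,b\rangle\triangleright^H_0 s'$; $\langle\lambda s,a\rangle\triangleright^H_k\lambda s'$ if $\langle s,a\rangle\triangleright^H_{k+1}s'$; $\langle st,a\rangle\triangleright^H_k s't'$ if $\langle s,a\rangle\triangleright^H_k s'$ and $\langle t,a\rangle\triangleright^H_k t'$. A closure represents a term, $(P,a)\gg_H s$, iff $P\gg u$ and $\langle u,a\rangle\triangleright^H_0 s$ for some $u$. The heap machine has states $(T,V,H)$ with $T,V$ lists of closures and steps: $((\mathsf{var}\,n::P,a)::T,V,H)\succ((P,a)::T,g::V,H)$ if $H[a,n]=g$; $((\mathsf{lam}::P,a)::T,V,H)\succ((P',a)::T,(Q,a)::V,H)$ if $\varphi P=(Q,P')$; $((\mathsf{app}::P,a)::T,g::(Q,b)::V,H)\succ((Q,|H|+1)::(P,a)::T,V,H++[(g,b)])$; $(([],a)::T,V,H)\succ(T,V,H)$. The initial state is $\sigma_s:=([(\gamma s,0)],[],[])$.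 *)

theory Defs
  imports Main
begin

datatype tm = Var nat | App tm tm | Lam tm

fun bound :: "nat \<Rightarrow> tm \<Rightarrow> bool" where
  "bound d (Var n) = (n < d)"
| "bound d (App s t) = (bound d s \<and> bound d t)"
| "bound d (Lam s) = bound (Suc d) s"

definition closed :: "tm \<Rightarrow> bool" where
  "closed s = bound 0 s"

fun subst :: "tm \<Rightarrow> nat \<Rightarrow> tm \<Rightarrow> tm" where
  "subst (Var n) k u = (if n = k then u else Var n)"
| "subst (App s t) k u = App (subst s k u) (subst t k u)"
| "subst (Lam s) k u = Lam (subst s (Suc k) u)"

inductive step :: "tm \<Rightarrow> tm \<Rightarrow> bool" where
  stepBeta: "step (App (Lam s) (Lam t)) (subst s 0 (Lam t))"
| stepAppL: "step s s' \<Longrightarrow> step (App s t) (App s' t)"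
| stepAppR: "step t t' \<Longrightarrow> step (App (Lam s) t) (App (Lam s) t')"

datatype cmd = Ret | VarC nat | LamC | AppC

fun gamma :: "tm \<Rightarrow> cmd list" where
  "gamma (Var n) = [VarC n]"
| "gamma (App s t) = gamma s @ gamma t @ [AppC]"
| "gamma (Lam s) = LamC # gamma s @ [Ret]"

definition prog_rep :: "cmd list \<Rightarrow> tm \<Rightarrow> bool" where
  "prog_rep P s \<longleftrightarrow> (\<exists>u. P = gamma u \<and> s = Lam u)"

fun phi_aux :: "nat \<Rightarrow> cmd list \<Rightarrow> cmd list \<Rightarrow> (cmd list \<times> cmd list) option" where
  "phi_aux k Q [] = None"
| "phi_aux 0 Q (Ret # P) = Some (Q, P)"
| "phi_aux (Suc k) Q (Ret # P) = phi_aux k (Q @ [Ret]) P"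
| "phi_aux k Q (LamC # P) = phi_aux (Suc k) (Q @ [LamC]) P"
| "phi_aux k Q (VarC n # P) = phi_aux k (Q @ [VarC n]) P"
| "phi_aux k Q (AppC # P) = phi_aux k (Q @ [AppC]) P"

definition phi :: "cmd list \<Rightarrow> (cmd list \<times> cmd list) option" where
  "phi P = phi_aux 0 [] P"

type_synonym clo = "cmd list \<times> nat"
type_synonym heap = "(clo \<times> nat) list"

definition heap_get :: "heap \<Rightarrow> nat \<Rightarrow> (clo \<times> nat) option" where
  "heap_get H a = (if 1 \<le> a \<and> a \<le> length H then Some (H ! (a - 1)) else None)"

fun lookup :: "heap \<Rightarrow> nat \<Rightarrow> nat \<Rightarrow> clo option" where
  "lookup H a 0 = map_option fst (heap_get H a)"
| "lookup H a (Suc n) = (case heap_get H a of None \<Rightarrow> None | Some (g, b) \<Rightarrow> lookup H b n)"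

inductive unfold :: "heap \<Rightarrow> tm \<Rightarrow> nat \<Rightarrow> nat \<Rightarrow> tm \<Rightarrow> bool" where
  unfVarBound: "n < k \<Longrightarrow> unfold H (Var n) a k (Var n)"
| unfVarFree: "n \<ge> k \<Longrightarrow> lookup H a (n - k) = Some (P, b) \<Longrightarrow> prog_rep P u
    \<Longrightarrow> unfold H u b 0 s' \<Longrightarrow> unfold H (Var n) a k s'"
| unfLam: "unfold H s a (Suc k) s' \<Longrightarrow> unfold H (Lam s) a k (Lam s')"
| unfApp: "unfold H s a k s' \<Longrightarrow> unfold H t a k t' \<Longrightarrow> unfold H (App s t) a k (App s' t')"

definition clo_rep :: "heap \<Rightarrow> clo \<Rightarrow> tm \<Rightarrow> bool" where
  "clo_rep H g s \<longleftrightarrow> (\<exists>u. prog_rep (fst g) u \<and> unfold H u (snd g) 0 s)"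

type_synonym state = "clo list \<times> clo list \<times> heap"

inductive mstep :: "state \<Rightarrow> state \<Rightarrow> bool" where
  mVar: "lookup H a n = Some g \<Longrightarrow>
    mstep ((VarC n # P, a) # T, V, H) ((P, a) # T, g # V, H)"
| mLam: "phi P = Some (Q, P') \<Longrightarrow>
    mstep ((LamC # P, a) # T, V, H) ((P', a) # T, (Q, a) # V, H)"
| mApp: "mstep ((AppC # P, a) # T, g # (Q, b) # V, H)
    ((Q, Suc (length H)) # (P, a) # T, V, H @ [(g, b)])"
| mNil: "mstep (([], a) # T, V, H) (T, V, H)"

definition init :: "tm \<Rightarrow> state" where
  "init s = ([(gamma s, 0)], [], [])"

end

theory Submission
  imports Defs
begin

lemma phi_aux_gamma: "phi_aux k Q (gamma u @ R) = phi_aux k (Q @ gamma u) R"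
  by (induction u arbitrary: k Q R) auto

lemma phi_lam: "phi (gamma u @ Ret # P) = Some (gamma u, P)"
  unfolding phi_def by (simp add: phi_aux_gamma)

lemma bound_mono: "bound k s \<Longrightarrow> k \<le> j \<Longrightarrow> bound j s"
  by (induction k s arbitrary: j rule: bound.induct) auto

lemma subst_bound: "bound k s \<Longrightarrow> k \<le> j \<Longrightarrow> subst s j v = s"
  by (induction k s arbitrary: j rule: bound.induct) auto

lemma unfold_bound: "unfold H u a k s \<Longrightarrow> bound k s"
  by (induction rule: unfold.induct) (auto intro: bound_mono)

lemma unfold_refl: "bound k s \<Longrightarrow> unfold H s a k s"
  by (induction k s arbitrary: a rule: bound.induct) (auto intro: unfold.intros)

lemma heap_get_app: "heap_get H a = Some x \<Longrightarrow> heap_get (H @ X) a = Some x"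
  by (auto simp: heap_get_def nth_append split: if_splits)

lemma lookup_app: "lookup H a n = Some g \<Longrightarrow> lookup (H @ X) a n = Some g"
  by (induction H a n rule: lookup.induct)
     (auto simp: heap_get_app split: option.splits dest: heap_get_app[where X=X])

lemma unfold_app: "unfold H u a k s \<Longrightarrow> unfold (H @ X) u a k s"
  by (induction rule: unfold.induct) (auto intro: unfold.intros lookup_app)

lemma clo_rep_app: "clo_rep H g s \<Longrightarrow> clo_rep (H @ X) g s"
  unfolding clo_rep_def using unfold_app by blast

lemma unfold_lam_inv: "unfold H (Lam u) a k s \<Longrightarrow> \<exists>s'. s = Lam s' \<and> unfold H u a (Suc k) s'"
  by (induction H "Lam u" a k s rule: unfold.induct) auto

lemma unfold_subst:
  assumes "unfold H w c (Suc k) x" "heap_get H d = Some (g, c)" "clo_rep H g v"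
  shows "unfold H w d k (subst x k v)"
  using assms
proof (induction H w c "Suc k" x arbitrary: k rule: unfold.induct)
  case (unfVarBound n H a)
  show ?case
  proof (cases "n = k")
    case True
    obtain P b where g: "g = (P, b)" by (cases g)
    from unfVarBound.prems(2) g obtain u where "prog_rep P u" "unfold H u b 0 v"
      unfolding clo_rep_def by auto
    moreover have "lookup H d (n - k) = Some (P, b)"
      using True unfVarBound.prems(1) g by simp
    ultimately show ?thesis using True by (auto intro: unfVarFree)
  next
    case False
    then have "n < k" using unfVarBound.hyps by simp
    then show ?thesis using False by (auto intro: unfold.unfVarBound)
  qed
next
  case (unfVarFree n H a P b u s')
  have e: "subst s' k v = s'"
    using unfold_bound[OF unfVarFree.hyps(4)] by (auto intro: subst_bound)
  have "n - k = Suc (n - Suc k)" using unfVarFree.hyps(1) by simp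
  then have "lookup H d (n - k) = Some (P, b)"
    using unfVarFree.hyps(2) unfVarFree.prems(1) by simp
  then show ?case using e unfVarFree.hyps by (auto intro: unfold.unfVarFree)
next
  case (unfLam H s a s')
  then show ?case by (auto intro: unfold.intros)
next
  case (unfApp H s a s' t t')
  then show ?case by (auto intro: unfold.intros)
qed

lemma lam_nostep: "\<not> step (Lam s) t"
  by (auto elim: step.cases)

lemma lam_pow: assumes "(step ^^ k) (Lam s) t" shows "k = 0 \<and> t = Lam s"
proof (cases k)
  case 0
  then show ?thesis using assms by simp
next
  case (Suc m)
  then show ?thesis using assms relpowp_Suc_D2[where P=step and n=m and x="Lam s" and z=t] lam_nostep by blast
qed

lemma decomp:
  "(step ^^ k) (App s1 s2) t \<Longrightarrow> \<exists>w. t = Lam w \<Longrightarrow>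
   \<exists>k1 k2 k3 a b. k = k1 + k2 + Suc k3 \<and> (step ^^ k1) s1 (Lam a) \<and> (step ^^ k2) s2 (Lam b)
     \<and> (step ^^ k3) (subst a 0 (Lam b)) t"
proof (induction k arbitrary: s1 s2)
  case 0
  then show ?case by auto
next
  case (Suc k)
  from Suc.prems(1) obtain y where st: "step (App s1 s2) y" and r: "(step ^^ k) y t"
    using relpowp_Suc_D2[OF Suc.prems(1)] by blast
  from st show ?case
  proof (cases rule: step.cases)
    case (stepBeta s t')
    then show ?thesis using r
      by (intro exI[of _ 0] exI[of _ 0] exI[of _ k]) auto
  next
    case (stepAppL s1')
    from Suc.IH[of s1' s2] r stepAppL Suc.prems(2) obtain k1 k2 k3 a b where
      h: "k = k1 + k2 + Suc k3" "(step ^^ k1) s1' (Lam a)" "(step ^^ k2) s2 (Lam b)"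
        "(step ^^ k3) (subst a 0 (Lam b)) t" by blast
    have "(step ^^ Suc k1) s1 (Lam a)" using h(2) stepAppL by (metis relpowp_Suc_I2)
    moreover have "Suc k = Suc k1 + k2 + Suc k3" using h(1) by simp
    ultimately show ?thesis using h by blast
  next
    case (stepAppR s2' s)
    from Suc.IH[of "Lam s" s2'] r stepAppR Suc.prems(2) obtain k1 k2 k3 a b where
      h: "k = k1 + k2 + Suc k3" "(step ^^ k1) (Lam s) (Lam a)" "(step ^^ k2) s2' (Lam b)"
        "(step ^^ k3) (subst a 0 (Lam b)) t" by blast
    from lam_pow[OF h(2)] have "k1 = 0" "a = s" by auto
    have "(step ^^ Suc k2) s2 (Lam b)" using h(3) stepAppR by (metis relpowp_Suc_I2)
    moreover have "Suc k = 0 + Suc k2 + Suc k3" using h(1) \<open>k1 = 0\<close> by simp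
    moreover have "(step ^^ 0) s1 (Lam s)" using stepAppR by simp
    ultimately show ?thesis using h \<open>a = s\<close> by blast
  qed
qed

lemma main:
  "unfold H u a 0 s \<Longrightarrow> (step ^^ k) s t \<Longrightarrow> \<exists>w. t = Lam w \<Longrightarrow>
   \<exists>g X. (mstep ^^ Suc (4 * k)) ((gamma u @ P, a) # T, V, H) ((P, a) # T, g # V, H @ X)
     \<and> clo_rep (H @ X) g t"
proof (induction k arbitrary: u a H s t P T V rule: less_induct)
  case (less k)
  show ?case
  proof (cases u)
    case (Var n)
    from less.prems(1) Var obtain Q b u' where
      lk: "lookup H a n = Some (Q, b)" and pr: "prog_rep Q u'" and uf: "unfold H u' b 0 s"
      by (auto elim: unfold.cases)
    from pr obtain u0 where u0: "Q = gamma u0" "u' = Lam u0" unfolding prog_rep_def by auto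
    from unfold_lam_inv[OF uf[unfolded u0(2)]] obtain s' where "s = Lam s'" by auto
    with lam_pow less.prems(2) have kt: "k = 0" "t = s" by auto
    have "mstep ((gamma u @ P, a) # T, V, H) ((P, a) # T, (Q, b) # V, H @ [])"
      using Var lk by (auto intro: mVar)
    moreover have "clo_rep (H @ []) (Q, b) t" using kt pr uf unfolding clo_rep_def by auto
    ultimately show ?thesis unfolding kt(1) mult_0_right relpowp_Suc_0 by blast
  next
    case (Lam u0)
    from unfold_lam_inv[OF less.prems(1)[unfolded Lam]] obtain s' where "s = Lam s'" by auto
    with lam_pow less.prems(2) have kt: "k = 0" "t = s" by auto
    have "mstep ((gamma u @ P, a) # T, V, H) ((P, a) # T, (gamma u0, a) # V, H @ [])"
      using Lam phi_lam[of u0 P] by (auto intro: mLam)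
    moreover have "clo_rep (H @ []) (gamma u0, a) t" using kt less.prems(1) Lam
      unfolding clo_rep_def prog_rep_def by auto
    ultimately show ?thesis unfolding kt(1) mult_0_right relpowp_Suc_0 by blast
  next
    case (App u1 u2)
    from less.prems(1) App obtain s1 s2 where ss: "s = App s1 s2"
      and uf1: "unfold H u1 a 0 s1" and uf2: "unfold H u2 a 0 s2"
      by (auto elim: unfold.cases)
    from decomp[OF less.prems(2)[unfolded ss] less.prems(3)] obtain k1 k2 k3 a1 b2 where
      h: "k = k1 + k2 + Suc k3" "(step ^^ k1) s1 (Lam a1)" "(step ^^ k2) s2 (Lam b2)"
        "(step ^^ k3) (subst a1 0 (Lam b2)) t" by blast
    from less.IH[of k1 H u1 a s1 "Lam a1" "gamma u2 @ AppC # P" T V] h uf1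
    obtain g1 X1 where
      r1: "(mstep ^^ Suc (4 * k1)) ((gamma u1 @ gamma u2 @ AppC # P, a) # T, V, H)
            ((gamma u2 @ AppC # P, a) # T, g1 # V, H @ X1)"
      and c1: "clo_rep (H @ X1) g1 (Lam a1)" by auto
    from less.IH[of k2 "H @ X1" u2 a s2 "Lam b2" "AppC # P" T "g1 # V"] h unfold_app[OF uf2]
    obtain g2 X2 where
      r2: "(mstep ^^ Suc (4 * k2)) ((gamma u2 @ AppC # P, a) # T, g1 # V, H @ X1)
            ((AppC # P, a) # T, g2 # g1 # V, H @ X1 @ X2)"
      and c2: "clo_rep (H @ X1 @ X2) g2 (Lam b2)" by auto
    define H2 where "H2 = H @ X1 @ X2"
    obtain Q1 c where g1: "g1 = (Q1, c)" by (cases g1)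
    from clo_rep_app[OF c1, of X2] g1 obtain w where
      w: "Q1 = gamma w" "unfold H2 (Lam w) c 0 (Lam a1)"
      unfolding clo_rep_def prog_rep_def H2_def by auto
    from unfold_lam_inv[OF w(2)] have uw: "unfold H2 w c 1 a1" by auto
    define H3 where "H3 = H2 @ [(g2, c)]"
    have r3: "mstep ((AppC # P, a) # T, g2 # g1 # V, H2)
            ((Q1, Suc (length H2)) # (P, a) # T, V, H3)"
      unfolding g1 H3_def by (rule mApp)
    have hg: "heap_get H3 (Suc (length H2)) = Some (g2, c)"
      unfolding H3_def heap_get_def by simp
    have c2': "clo_rep H3 g2 (Lam b2)" using clo_rep_app[OF c2] unfolding H3_def H2_def by simp
    have uw3: "unfold H3 w c (Suc 0) a1" using unfold_app[OF uw] unfolding H3_def by simp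
    have us: "unfold H3 w (Suc (length H2)) 0 (subst a1 0 (Lam b2))"
      by (rule unfold_subst[OF uw3 hg c2'])
    from less.IH[of k3 H3 w "Suc (length H2)" "subst a1 0 (Lam b2)" t "[]" "(P, a) # T" V]
      h us less.prems(3)
    obtain g3 X3 where
      r4: "(mstep ^^ Suc (4 * k3)) ((gamma w @ [], Suc (length H2)) # (P, a) # T, V, H3)
            (([], Suc (length H2)) # (P, a) # T, g3 # V, H3 @ X3)"
      and c3: "clo_rep (H3 @ X3) g3 t" by auto
    have r5: "mstep (([], Suc (length H2)) # (P, a) # T, g3 # V, H3 @ X3)
                   ((P, a) # T, g3 # V, H3 @ X3)" by (rule mNil)
    have "(mstep ^^ (Suc (4 * k1) + Suc (4 * k2))) ((gamma u @ P, a) # T, V, H)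
            ((AppC # P, a) # T, g2 # g1 # V, H2)"
      using relpowp_trans[OF r1 r2] App unfolding H2_def by simp
    then have "(mstep ^^ Suc (Suc (4 * k1) + Suc (4 * k2))) ((gamma u @ P, a) # T, V, H)
            ((Q1, Suc (length H2)) # (P, a) # T, V, H3)"
      using r3 by (rule relpowp_Suc_I)
    from relpowp_trans[OF this r4[unfolded w(1)[symmetric] append_Nil2]]
    have r6: "(mstep ^^ (Suc (Suc (4 * k1) + Suc (4 * k2)) + Suc (4 * k3))) ((gamma u @ P, a) # T, V, H)
            (([], Suc (length H2)) # (P, a) # T, g3 # V, H3 @ X3)" .
    have eq: "Suc (Suc (Suc (4 * k1) + Suc (4 * k2)) + Suc (4 * k3)) = Suc (4 * k)"
      using h(1) by simp
    from relpowp_Suc_I[OF r6 r5, unfolded eq]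
    have "(mstep ^^ Suc (4 * k)) ((gamma u @ P, a) # T, V, H) ((P, a) # T, g3 # V, H3 @ X3)" .
    moreover have "H3 @ X3 = H @ (X1 @ X2 @ [(g2, c)] @ X3)" unfolding H3_def H2_def by simp
    ultimately show ?thesis using c3 by metis
  qed
qed

theorem theorem16:
  fixes s t :: tm and k :: nat
  assumes "closed s"
    and "(step ^^ k) s t"
    and "\<exists>u. t = Lam u"
  shows "\<exists>g H. (mstep ^^ (4 * k + 2)) (init s) ([], [g], H) \<and> clo_rep H g t"
proof -
  have "unfold [] s 0 0 s" using assms(1) unfolding closed_def by (rule unfold_refl)
  from main[OF this assms(2,3), of "[]" "[]" "[]"] obtain g X where
    r: "(mstep ^^ Suc (4 * k)) ((gamma s, 0) # [], [], []) (([], 0) # [], [g], X)"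
    and c: "clo_rep X g t" by auto
  have "mstep (([], 0) # [], [g], X) ([], [g], X)" by (rule mNil)
  from relpowp_Suc_I[OF r this] have "(mstep ^^ (4 * k + 2)) (init s) ([], [g], X)"
    unfolding init_def by simp
  then show ?thesis using c by blast
qed

end
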